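(* Let $(\mathcal A,(p_n))$ be a Fréchet algebra, $I$ a closed ideal of $\mathcal A$, and $J$ a closed ideal of $\mathcal A$ with $J\subseteq I$. If $\mathcal A$ is amenable modulo $I$, then the Fréchet algebra $\mathcal A/J$ is amenable modulo $I/J$.
   Context: A Fréchet algebra $(\mathcal A,(p_n))$ is a complete Hausdorff topological algebra whose topology is given by an increasing sequence of submultiplicative seminorms $p_n$; $\mathcal A/J$ carries the quotient seminorms $\hat p_n(a+J)=\inf\{p_n(a+b):b\in J\}$ and $I/J$ is a closed ideal of it. A Fréchet algebra $\mathcal A$ is amenable modulo a closed ideal $I$ if for every Banach $\mathcal A$-bimodule $E$ (with continuous module actions) such that $I\cdot E=E\cdot I=0$, every continuous derivation $D:\mathcal A\to E^*$ is inner on $\mathcal A\setminus I$, i.e. there is $f\in E^*$ with $D(a)=a\cdot f-f\cdot a$ for all $a\in\mathcal A\setminus I$. *)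

theory Defs
  imports "HOL-Analysis.Analysis"
begin

record 'a falg =
  fcar :: "'a set"
  fadd :: "'a \<Rightarrow> 'a \<Rightarrow> 'a"
  fzero :: "'a"
  fmul :: "'a \<Rightarrow> 'a \<Rightarrow> 'a"
  fsmul :: "complex \<Rightarrow> 'a \<Rightarrow> 'a"
  fsn :: "nat \<Rightarrow> 'a \<Rightarrow> real"

definition vs_axioms ::
  "'v set \<Rightarrow> ('v \<Rightarrow> 'v \<Rightarrow> 'v) \<Rightarrow> 'v \<Rightarrow> (complex \<Rightarrow> 'v \<Rightarrow> 'v) \<Rightarrow> bool" where
  "vs_axioms V ad z sm \<longleftrightarrow>
     z \<in> V \<and>
     (\<forall>x\<in>V. \<forall>y\<in>V. ad x y \<in> V) \<and>
     (\<forall>c. \<forall>x\<in>V. sm c x \<in> V) \<and>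
     (\<forall>x\<in>V. \<forall>y\<in>V. \<forall>w\<in>V. ad (ad x y) w = ad x (ad y w)) \<and>
     (\<forall>x\<in>V. \<forall>y\<in>V. ad x y = ad y x) \<and>
     (\<forall>x\<in>V. ad z x = x) \<and>
     (\<forall>x\<in>V. ad x (sm (-1) x) = z) \<and>
     (\<forall>c. \<forall>x\<in>V. \<forall>y\<in>V. sm c (ad x y) = ad (sm c x) (sm c y)) \<and>
     (\<forall>c d. \<forall>x\<in>V. sm (c + d) x = ad (sm c x) (sm d x)) \<and>
     (\<forall>c d. \<forall>x\<in>V. sm (c * d) x = sm c (sm d x)) \<and>
     (\<forall>x\<in>V. sm 1 x = x)"

definition fminus :: "'a falg \<Rightarrow> 'a \<Rightarrow> 'a \<Rightarrow> 'a" where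
  "fminus A x y = fadd A x (fsmul A (-1) y)"

definition fconv :: "'a falg \<Rightarrow> (nat \<Rightarrow> 'a) \<Rightarrow> 'a \<Rightarrow> bool" where
  "fconv A s a \<longleftrightarrow> (\<forall>n. (\<lambda>k. fsn A n (fminus A (s k) a)) \<longlonglongrightarrow> 0)"

definition fcauchy :: "'a falg \<Rightarrow> (nat \<Rightarrow> 'a) \<Rightarrow> bool" where
  "fcauchy A s \<longleftrightarrow> (\<forall>n. \<forall>e>0. \<exists>N. \<forall>k\<ge>N. \<forall>m\<ge>N. fsn A n (fminus A (s k) (s m)) < e)"

definition frechet_algebra :: "'a falg \<Rightarrow> bool" where
  "frechet_algebra A \<longleftrightarrow>
     vs_axioms (fcar A) (fadd A) (fzero A) (fsmul A) \<and>
     (\<forall>x\<in>fcar A. \<forall>y\<in>fcar A. fmul A x y \<in> fcar A) \<and>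
     (\<forall>x\<in>fcar A. \<forall>y\<in>fcar A. \<forall>z\<in>fcar A. fmul A (fmul A x y) z = fmul A x (fmul A y z)) \<and>
     (\<forall>x\<in>fcar A. \<forall>y\<in>fcar A. \<forall>z\<in>fcar A. fmul A x (fadd A y z) = fadd A (fmul A x y) (fmul A x z)) \<and>
     (\<forall>x\<in>fcar A. \<forall>y\<in>fcar A. \<forall>z\<in>fcar A. fmul A (fadd A x y) z = fadd A (fmul A x z) (fmul A y z)) \<and>
     (\<forall>c. \<forall>x\<in>fcar A. \<forall>y\<in>fcar A. fsmul A c (fmul A x y) = fmul A (fsmul A c x) y \<and>
                                      fsmul A c (fmul A x y) = fmul A x (fsmul A c y)) \<and>
     \<comment> \<open>each p_n is a submultiplicative seminorm, and the sequence is increasing\<close>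
     (\<forall>n. \<forall>x\<in>fcar A. \<forall>y\<in>fcar A. fsn A n (fadd A x y) \<le> fsn A n x + fsn A n y) \<and>
     (\<forall>n c. \<forall>x\<in>fcar A. fsn A n (fsmul A c x) = cmod c * fsn A n x) \<and>
     (\<forall>n. \<forall>x\<in>fcar A. \<forall>y\<in>fcar A. fsn A n (fmul A x y) \<le> fsn A n x * fsn A n y) \<and>
     (\<forall>n. \<forall>x\<in>fcar A. fsn A n x \<le> fsn A (Suc n) x) \<and>
     \<comment> \<open>Hausdorff\<close>
     (\<forall>x\<in>fcar A. (\<forall>n. fsn A n x = 0) \<longrightarrow> x = fzero A) \<and>
     \<comment> \<open>complete\<close>
     (\<forall>s. (\<forall>k. s k \<in> fcar A) \<and> fcauchy A s \<longrightarrow> (\<exists>a\<in>fcar A. fconv A s a))"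

text \<open>Closed two-sided ideal (closed = sequentially closed; the topology is metrizable).\<close>
definition closed_ideal :: "'a falg \<Rightarrow> 'a set \<Rightarrow> bool" where
  "closed_ideal A I \<longleftrightarrow>
     I \<subseteq> fcar A \<and> fzero A \<in> I \<and>
     (\<forall>x\<in>I. \<forall>y\<in>I. fadd A x y \<in> I) \<and>
     (\<forall>c. \<forall>x\<in>I. fsmul A c x \<in> I) \<and>
     (\<forall>a\<in>fcar A. \<forall>x\<in>I. fmul A a x \<in> I \<and> fmul A x a \<in> I) \<and>
     (\<forall>s a. (\<forall>k. s k \<in> I) \<and> a \<in> fcar A \<and> fconv A s a \<longrightarrow> a \<in> I)"

definition coset :: "'a falg \<Rightarrow> 'a set \<Rightarrow> 'a \<Rightarrow> 'a set" where
  "coset A J a = {fadd A a b | b. b \<in> J}"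

definition qrep :: "'a set \<Rightarrow> 'a" where
  "qrep X = (SOME x. x \<in> X)"

definition quot :: "'a falg \<Rightarrow> 'a set \<Rightarrow> 'a set falg" where
  "quot A J = \<lparr> fcar = coset A J ` fcar A,
                fadd = (\<lambda>X Y. coset A J (fadd A (qrep X) (qrep Y))),
                fzero = coset A J (fzero A),
                fmul = (\<lambda>X Y. coset A J (fmul A (qrep X) (qrep Y))),
                fsmul = (\<lambda>c X. coset A J (fsmul A c (qrep X))),
                fsn = (\<lambda>n X. Inf ((\<lambda>x. fsn A n x) ` X)) \<rparr>"

definition qideal :: "'a falg \<Rightarrow> 'a set \<Rightarrow> 'a set \<Rightarrow> 'a set set" where
  "qideal A J I = coset A J ` I"

record 'e bsp =
  bcar :: "'e set"
  badd :: "'e \<Rightarrow> 'e \<Rightarrow> 'e"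
  bzero :: "'e"
  bsmul :: "complex \<Rightarrow> 'e \<Rightarrow> 'e"
  bnorm :: "'e \<Rightarrow> real"

definition bminus :: "'e bsp \<Rightarrow> 'e \<Rightarrow> 'e \<Rightarrow> 'e" where
  "bminus E x y = badd E x (bsmul E (-1) y)"

definition banach_space :: "'e bsp \<Rightarrow> bool" where
  "banach_space E \<longleftrightarrow>
     vs_axioms (bcar E) (badd E) (bzero E) (bsmul E) \<and>
     (\<forall>x\<in>bcar E. \<forall>y\<in>bcar E. bnorm E (badd E x y) \<le> bnorm E x + bnorm E y) \<and>
     (\<forall>c. \<forall>x\<in>bcar E. bnorm E (bsmul E c x) = cmod c * bnorm E x) \<and>
     (\<forall>x\<in>bcar E. bnorm E x = 0 \<longrightarrow> x = bzero E) \<and>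
     (\<forall>s. (\<forall>k. s k \<in> bcar E) \<and>
          (\<forall>e>0. \<exists>N. \<forall>k\<ge>N. \<forall>m\<ge>N. bnorm E (bminus E (s k) (s m)) < e)
          \<longrightarrow> (\<exists>x\<in>bcar E. (\<lambda>k. bnorm E (bminus E (s k) x)) \<longlonglongrightarrow> 0))"

definition bimodule ::
  "'a falg \<Rightarrow> 'e bsp \<Rightarrow> ('a \<Rightarrow> 'e \<Rightarrow> 'e) \<Rightarrow> ('e \<Rightarrow> 'a \<Rightarrow> 'e) \<Rightarrow> bool" where
  "bimodule A E la ra \<longleftrightarrow>
     (\<forall>a\<in>fcar A. \<forall>x\<in>bcar E. la a x \<in> bcar E \<and> ra x a \<in> bcar E) \<and>
     (\<forall>a\<in>fcar A. \<forall>b\<in>fcar A. \<forall>x\<in>bcar E. la (fadd A a b) x = badd E (la a x) (la b x)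
                                      \<and> ra x (fadd A a b) = badd E (ra x a) (ra x b)) \<and>
     (\<forall>a\<in>fcar A. \<forall>x\<in>bcar E. \<forall>y\<in>bcar E. la a (badd E x y) = badd E (la a x) (la a y)
                                      \<and> ra (badd E x y) a = badd E (ra x a) (ra y a)) \<and>
     (\<forall>c. \<forall>a\<in>fcar A. \<forall>x\<in>bcar E.
          la (fsmul A c a) x = bsmul E c (la a x) \<and> la a (bsmul E c x) = bsmul E c (la a x) \<and>
          ra x (fsmul A c a) = bsmul E c (ra x a) \<and> ra (bsmul E c x) a = bsmul E c (ra x a)) \<and>
     (\<forall>a\<in>fcar A. \<forall>b\<in>fcar A. \<forall>x\<in>bcar E.
          la (fmul A a b) x = la a (la b x) \<and>
          ra x (fmul A a b) = ra (ra x a) b \<and>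
          ra (la a x) b = la a (ra x b)) \<and>
     (\<forall>s a t x. (\<forall>k. s k \<in> fcar A \<and> t k \<in> bcar E) \<and> a \<in> fcar A \<and> x \<in> bcar E \<and>
          fconv A s a \<and> (\<lambda>k. bnorm E (bminus E (t k) x)) \<longlonglongrightarrow> 0 \<longrightarrow>
          (\<lambda>k. bnorm E (bminus E (la (s k) (t k)) (la a x))) \<longlonglongrightarrow> 0 \<and>
          (\<lambda>k. bnorm E (bminus E (ra (t k) (s k)) (ra x a))) \<longlonglongrightarrow> 0)"

text \<open>Elements of the dual E* are represented by functions on the carrier of E.\<close>
definition in_dual :: "'e bsp \<Rightarrow> ('e \<Rightarrow> complex) \<Rightarrow> bool" where
  "in_dual E f \<longleftrightarrow>
     (\<forall>x\<in>bcar E. \<forall>y\<in>bcar E. f (badd E x y) = f x + f y) \<and>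
     (\<forall>c. \<forall>x\<in>bcar E. f (bsmul E c x) = c * f x) \<and>
     (\<exists>C. \<forall>x\<in>bcar E. cmod (f x) \<le> C * bnorm E x)"

definition dnorm :: "'e bsp \<Rightarrow> ('e \<Rightarrow> complex) \<Rightarrow> real" where
  "dnorm E f = Sup ((\<lambda>x. cmod (f x)) ` {x \<in> bcar E. bnorm E x \<le> 1})"

text \<open>Continuous derivation D : A \<rightarrow> E*, with the dual actions
  (a.f)(x) = f(x.a) and (f.a)(x) = f(a.x).\<close>
definition cont_derivation ::
  "'a falg \<Rightarrow> 'e bsp \<Rightarrow> ('a \<Rightarrow> 'e \<Rightarrow> 'e) \<Rightarrow> ('e \<Rightarrow> 'a \<Rightarrow> 'e) \<Rightarrow> ('a \<Rightarrow> 'e \<Rightarrow> complex) \<Rightarrow> bool" where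
  "cont_derivation A E la ra D \<longleftrightarrow>
     (\<forall>a\<in>fcar A. in_dual E (D a)) \<and>
     (\<forall>a\<in>fcar A. \<forall>b\<in>fcar A. \<forall>x\<in>bcar E. D (fadd A a b) x = D a x + D b x) \<and>
     (\<forall>c. \<forall>a\<in>fcar A. \<forall>x\<in>bcar E. D (fsmul A c a) x = c * D a x) \<and>
     (\<forall>a\<in>fcar A. \<forall>b\<in>fcar A. \<forall>x\<in>bcar E. D (fmul A a b) x = D b (ra x a) + D a (la b x)) \<and>
     (\<forall>s a. (\<forall>k. s k \<in> fcar A) \<and> a \<in> fcar A \<and> fconv A s a \<longrightarrow>
          (\<lambda>k. dnorm E (\<lambda>x. D (s k) x - D a x)) \<longlonglongrightarrow> 0)"

text \<open>Amenability modulo a closed ideal I, quantifying over Banach bimodules whose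
  underlying elements have type 'e.\<close>
definition amenable_mod :: "'a falg \<Rightarrow> 'a set \<Rightarrow> 'e itself \<Rightarrow> bool" where
  "amenable_mod A I (_ :: 'e itself) \<longleftrightarrow>
     (\<forall>(E :: 'e bsp) la ra D.
        banach_space E \<and> bimodule A E la ra \<and>
        (\<forall>a\<in>I. \<forall>x\<in>bcar E. la a x = bzero E \<and> ra x a = bzero E) \<and>
        cont_derivation A E la ra D \<longrightarrow>
        (\<exists>f. in_dual E f \<and>
             (\<forall>a\<in>fcar A - I. \<forall>x\<in>bcar E. D a x = f (ra x a) - f (la a x))))"

end

theory Submission
  imports Defs
begin

lemma frD:
  assumes "frechet_algebra A"
  shows "fzero A \<in> fcar A"
  "\<forall>x\<in>fcar A. \<forall>y\<in>fcar A. fadd A x y \<in> fcar A"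
  "\<forall>c. \<forall>x\<in>fcar A. fsmul A c x \<in> fcar A"
  "\<forall>x\<in>fcar A. \<forall>y\<in>fcar A. \<forall>w\<in>fcar A. fadd A (fadd A x y) w = fadd A x (fadd A y w)"
  "\<forall>x\<in>fcar A. \<forall>y\<in>fcar A. fadd A x y = fadd A y x"
  "\<forall>x\<in>fcar A. fadd A (fzero A) x = x"
  "\<forall>x\<in>fcar A. fadd A x (fsmul A (-1) x) = fzero A"
  "\<forall>c. \<forall>x\<in>fcar A. \<forall>y\<in>fcar A. fsmul A c (fadd A x y) = fadd A (fsmul A c x) (fsmul A c y)"
  "\<forall>c d. \<forall>x\<in>fcar A. fsmul A (c + d) x = fadd A (fsmul A c x) (fsmul A d x)"
  "\<forall>x\<in>fcar A. fsmul A 1 x = x"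
  "\<forall>x\<in>fcar A. \<forall>y\<in>fcar A. fmul A x y \<in> fcar A"
  "\<forall>x\<in>fcar A. \<forall>y\<in>fcar A. \<forall>z\<in>fcar A. fmul A x (fadd A y z) = fadd A (fmul A x y) (fmul A x z)"
  "\<forall>x\<in>fcar A. \<forall>y\<in>fcar A. \<forall>z\<in>fcar A. fmul A (fadd A x y) z = fadd A (fmul A x z) (fmul A y z)"
  "\<forall>n. \<forall>x\<in>fcar A. \<forall>y\<in>fcar A. fsn A n (fadd A x y) \<le> fsn A n x + fsn A n y"
  "\<forall>n c. \<forall>x\<in>fcar A. fsn A n (fsmul A c x) = cmod c * fsn A n x"
  using assms unfolding frechet_algebra_def vs_axioms_def by argo+
lemma ciD:
  assumes "closed_ideal A J"
  shows "J \<subseteq> fcar A" "fzero A \<in> J"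
  "\<forall>x\<in>J. \<forall>y\<in>J. fadd A x y \<in> J"
  "\<forall>c. \<forall>x\<in>J. fsmul A c x \<in> J"
  "\<forall>a\<in>fcar A. \<forall>x\<in>J. fmul A a x \<in> J \<and> fmul A x a \<in> J"
  using assms unfolding closed_ideal_def by argo+

context
  fixes A :: "'a falg" and J :: "'a set"
  assumes fr: "frechet_algebra A" and cj: "closed_ideal A J"
begin

lemma zero_in: "fzero A \<in> fcar A"
  using frD(1)[OF fr] by blast

lemma add_cl: "\<And>x y. x \<in> fcar A \<Longrightarrow> y \<in> fcar A \<Longrightarrow> fadd A x y \<in> fcar A"
  using frD(2)[OF fr] by blast

lemma smul_cl: "\<And>c x. x \<in> fcar A \<Longrightarrow> fsmul A c x \<in> fcar A"
  using frD(3)[OF fr] by blast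

lemma mul_cl: "\<And>x y. x \<in> fcar A \<Longrightarrow> y \<in> fcar A \<Longrightarrow> fmul A x y \<in> fcar A"
  using frD(11)[OF fr] by blast

lemma assoc: "\<And>x y w. x \<in> fcar A \<Longrightarrow> y \<in> fcar A \<Longrightarrow> w \<in> fcar A \<Longrightarrow>
        fadd A (fadd A x y) w = fadd A x (fadd A y w)"
  using frD(4)[OF fr] by blast

lemma comm: "\<And>x y. x \<in> fcar A \<Longrightarrow> y \<in> fcar A \<Longrightarrow> fadd A x y = fadd A y x"
  using frD(5)[OF fr] by blast

lemma zl: "\<And>x. x \<in> fcar A \<Longrightarrow> fadd A (fzero A) x = x"
  using frD(6)[OF fr] by blast

lemma inv: "\<And>x. x \<in> fcar A \<Longrightarrow> fadd A x (fsmul A (-1) x) = fzero A"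
  using frD(7)[OF fr] by blast

lemma smul_add: "\<And>c x y. x \<in> fcar A \<Longrightarrow> y \<in> fcar A \<Longrightarrow>
        fsmul A c (fadd A x y) = fadd A (fsmul A c x) (fsmul A c y)"
  using frD(8)[OF fr] by blast

lemma add_smul: "\<And>c d x. x \<in> fcar A \<Longrightarrow> fsmul A (c + d) x = fadd A (fsmul A c x) (fsmul A d x)"
  using frD(9)[OF fr] by blast

lemma one_smul: "\<And>x. x \<in> fcar A \<Longrightarrow> fsmul A 1 x = x"
  using frD(10)[OF fr] by blast

lemma distl: "\<And>x y z. x \<in> fcar A \<Longrightarrow> y \<in> fcar A \<Longrightarrow> z \<in> fcar A \<Longrightarrow>
        fmul A x (fadd A y z) = fadd A (fmul A x y) (fmul A x z)"
  using frD(12)[OF fr] by blast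

lemma distr: "\<And>x y z. x \<in> fcar A \<Longrightarrow> y \<in> fcar A \<Longrightarrow> z \<in> fcar A \<Longrightarrow>
        fmul A (fadd A x y) z = fadd A (fmul A x z) (fmul A y z)"
  using frD(13)[OF fr] by blast

lemma tri: "\<And>n x y. x \<in> fcar A \<Longrightarrow> y \<in> fcar A \<Longrightarrow> fsn A n (fadd A x y) \<le> fsn A n x + fsn A n y"
  using frD(14)[OF fr] by blast

lemma hom: "\<And>n c x. x \<in> fcar A \<Longrightarrow> fsn A n (fsmul A c x) = cmod c * fsn A n x"
  using frD(15)[OF fr] by blast

lemma J_sub: "J \<subseteq> fcar A"
  using ciD(1)[OF cj] by blast

lemma J_zero: "fzero A \<in> J"
  using ciD(2)[OF cj] by blast

lemma J_add: "\<And>x y. x \<in> J \<Longrightarrow> y \<in> J \<Longrightarrow> fadd A x y \<in> J"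
  using ciD(3)[OF cj] by blast

lemma J_smul: "\<And>c x. x \<in> J \<Longrightarrow> fsmul A c x \<in> J"
  using ciD(4)[OF cj] by blast

lemma J_mul: "\<And>a x. a \<in> fcar A \<Longrightarrow> x \<in> J \<Longrightarrow> fmul A a x \<in> J \<and> fmul A x a \<in> J"
  using ciD(5)[OF cj] by blast

lemma swap3: "j \<in> fcar A \<Longrightarrow> k \<in> fcar A \<Longrightarrow> m \<in> fcar A \<Longrightarrow>
   fadd A j (fadd A k m) = fadd A k (fadd A j m)"
  by (metis assoc comm)

lemma coset_eq:
  assumes a: "a \<in> fcar A" and j: "j \<in> J"
  shows "coset A J (fadd A a j) = coset A J a"
proof -
  have jc: "j \<in> fcar A" using j J_sub by blast
  show ?thesis
  proof (rule set_eqI, rule iffI)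
    fix x assume "x \<in> coset A J (fadd A a j)"
    then obtain k where k: "k \<in> J" "x = fadd A (fadd A a j) k" unfolding coset_def by blast
    have kc: "k \<in> fcar A" using k J_sub by blast
    have "x = fadd A a (fadd A j k)" using k(2) assoc[OF a jc kc] by simp
    moreover have "fadd A j k \<in> J" using J_add[OF j k(1)] .
    ultimately show "x \<in> coset A J a" unfolding coset_def by blast
  next
    fix x assume "x \<in> coset A J a"
    then obtain k where k: "k \<in> J" "x = fadd A a k" unfolding coset_def by blast
    have kc: "k \<in> fcar A" using k J_sub by blast
    have mj: "fsmul A (-1) j \<in> J" using J_smul j by blast
    hence mjc: "fsmul A (-1) j \<in> fcar A" using J_sub by blast
    have "fadd A (fadd A a j) (fadd A k (fsmul A (-1) j)) = fadd A a (fadd A j (fadd A k (fsmul A (-1) j)))"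
      using assoc[OF a jc add_cl[OF kc mjc]] .
    also have "\<dots> = fadd A a (fadd A k (fadd A j (fsmul A (-1) j)))"
      using swap3[OF jc kc mjc] by simp
    also have "\<dots> = fadd A a k" using inv[OF jc] zl[OF kc] comm[OF kc zero_in] by simp
    finally have "x = fadd A (fadd A a j) (fadd A k (fsmul A (-1) j))" using k by simp
    moreover have "fadd A k (fsmul A (-1) j) \<in> J" using J_add[OF k(1) mj] .
    ultimately show "x \<in> coset A J (fadd A a j)" unfolding coset_def by blast
  qed
qed

lemma qrep_coset:
  assumes a: "a \<in> fcar A"
  obtains j where "j \<in> J" "qrep (coset A J a) = fadd A a j"
proof -
  have "fadd A a (fzero A) \<in> coset A J a" using J_zero unfolding coset_def by blast
  hence "qrep (coset A J a) \<in> coset A J a" unfolding qrep_def by (rule someI)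
  thus ?thesis using that unfolding coset_def by blast
qed

lemma coset_add:
  assumes a: "a \<in> fcar A" and b: "b \<in> fcar A"
  shows "fadd (quot A J) (coset A J a) (coset A J b) = coset A J (fadd A a b)"
proof -
  obtain j where j: "j \<in> J" "qrep (coset A J a) = fadd A a j" using qrep_coset a by blast
  obtain k where k: "k \<in> J" "qrep (coset A J b) = fadd A b k" using qrep_coset b by blast
  have jc: "j \<in> fcar A" and kc: "k \<in> fcar A" using j k J_sub by blast+
  have "fadd A (fadd A a j) (fadd A b k) = fadd A a (fadd A j (fadd A b k))"
    using assoc[OF a jc add_cl[OF b kc]] .
  also have "\<dots> = fadd A a (fadd A b (fadd A j k))" using swap3[OF jc b kc] by simp
  also have "\<dots> = fadd A (fadd A a b) (fadd A j k)" using assoc[OF a b add_cl[OF jc kc]] by simp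
  finally have e: "fadd A (fadd A a j) (fadd A b k) = fadd A (fadd A a b) (fadd A j k)" .
  show ?thesis unfolding quot_def using j k e coset_eq[OF add_cl[OF a b] J_add[OF j(1) k(1)]] by simp
qed

lemma coset_smul:
  assumes a: "a \<in> fcar A"
  shows "fsmul (quot A J) c (coset A J a) = coset A J (fsmul A c a)"
proof -
  obtain j where j: "j \<in> J" "qrep (coset A J a) = fadd A a j" using qrep_coset a by blast
  have jc: "j \<in> fcar A" using j J_sub by blast
  have "fsmul A c (fadd A a j) = fadd A (fsmul A c a) (fsmul A c j)" using smul_add[OF a jc] .
  thus ?thesis unfolding quot_def using j coset_eq[OF smul_cl[OF a] J_smul[OF j(1)]] by simp
qed

lemma coset_mul:
  assumes a: "a \<in> fcar A" and b: "b \<in> fcar A"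
  shows "fmul (quot A J) (coset A J a) (coset A J b) = coset A J (fmul A a b)"
proof -
  obtain j where j: "j \<in> J" "qrep (coset A J a) = fadd A a j" using qrep_coset a by blast
  obtain k where k: "k \<in> J" "qrep (coset A J b) = fadd A b k" using qrep_coset b by blast
  have jc: "j \<in> fcar A" and kc: "k \<in> fcar A" using j k J_sub by blast+
  have bk: "fadd A b k \<in> fcar A" using add_cl[OF b kc] .
  have "fmul A (fadd A a j) (fadd A b k) = fadd A (fmul A a (fadd A b k)) (fmul A j (fadd A b k))"
    using distr[OF a jc bk] .
  also have "\<dots> = fadd A (fadd A (fmul A a b) (fmul A a k)) (fmul A j (fadd A b k))"
    using distl[OF a b kc] by simp
  also have "\<dots> = fadd A (fmul A a b) (fadd A (fmul A a k) (fmul A j (fadd A b k)))"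
    using assoc[OF mul_cl[OF a b] mul_cl[OF a kc] mul_cl[OF jc bk]] .
  finally have e: "fmul A (fadd A a j) (fadd A b k) = fadd A (fmul A a b) (fadd A (fmul A a k) (fmul A j (fadd A b k)))" .
  have "fmul A a k \<in> J" using J_mul[OF a k(1)] by blast
  moreover have "fmul A j (fadd A b k) \<in> J" using J_mul[OF bk j(1)] by blast
  ultimately have "fadd A (fmul A a k) (fmul A j (fadd A b k)) \<in> J" using J_add by blast
  thus ?thesis unfolding quot_def using j k e coset_eq[OF mul_cl[OF a b]] by simp
qed

lemma coset_fminus:
  assumes a: "a \<in> fcar A" and b: "b \<in> fcar A"
  shows "fminus (quot A J) (coset A J a) (coset A J b) = coset A J (fminus A a b)"
  unfolding fminus_def using coset_smul[OF b] coset_add[OF a smul_cl[OF b]] by simp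

lemma sn_nonneg:
  assumes x: "x \<in> fcar A" shows "0 \<le> fsn A n x"
proof -
  have "fsmul A 2 (fzero A) = fadd A (fsmul A 1 (fzero A)) (fsmul A 1 (fzero A))"
    using add_smul[OF zero_in, of 1 1] by simp
  also have "\<dots> = fzero A" using one_smul[OF zero_in] zl[OF zero_in] by simp
  finally have "fsn A n (fzero A) = 2 * fsn A n (fzero A)" using hom[OF zero_in, of n 2] by simp
  hence z: "fsn A n (fzero A) = 0" by simp
  have "fsn A n (fadd A x (fsmul A (-1) x)) \<le> fsn A n x + fsn A n (fsmul A (-1) x)"
    using tri[OF x smul_cl[OF x]] .
  thus ?thesis using inv[OF x] z hom[OF x, of n "-1"] by simp
qed

lemma conv_quot:
  assumes s: "\<And>k. s k \<in> fcar A" and a: "a \<in> fcar A" and c: "fconv A s a"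
  shows "fconv (quot A J) (\<lambda>k. coset A J (s k)) (coset A J a)"
  unfolding fconv_def
proof
  fix n
  have t: "(\<lambda>k. fsn A n (fminus A (s k) a)) \<longlonglongrightarrow> 0" using c unfolding fconv_def by (rule spec)
  show "(\<lambda>k. fsn (quot A J) n (fminus (quot A J) (coset A J (s k)) (coset A J a))) \<longlonglongrightarrow> 0"
  proof (rule Lim_null_comparison[OF _ t], rule always_eventually, rule allI)
    fix k
    have m: "fminus A (s k) a \<in> fcar A" unfolding fminus_def using add_cl[OF s smul_cl[OF a]] .
    let ?S = "(\<lambda>x. fsn A n x) ` coset A J (fminus A (s k) a)"
    have sub: "coset A J (fminus A (s k) a) \<subseteq> fcar A"
    proof
      fix y assume "y \<in> coset A J (fminus A (s k) a)"
      then obtain j where "j \<in> J" "y = fadd A (fminus A (s k) a) j" unfolding coset_def by blast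
      thus "y \<in> fcar A" using add_cl[OF m] J_sub by blast
    qed
    have e0: "fadd A (fminus A (s k) a) (fzero A) = fminus A (s k) a"
      using comm[OF m zero_in] zl[OF m] by simp
    have mem: "fminus A (s k) a \<in> coset A J (fminus A (s k) a)"
      unfolding coset_def using e0 J_zero by force
    have nn: "\<And>y. y \<in> ?S \<Longrightarrow> 0 \<le> y"
    proof -
      fix y assume "y \<in> ?S"
      then obtain z where "z \<in> coset A J (fminus A (s k) a)" "y = fsn A n z" by blast
      thus "0 \<le> y" using sn_nonneg[of z n] sub by blast
    qed
    have bdd: "bdd_below ?S" using nn by (rule bdd_belowI)
    have le: "Inf ?S \<le> fsn A n (fminus A (s k) a)" using cInf_lower[OF imageI[OF mem] bdd] .
    have ne: "?S \<noteq> {}" using mem by blast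
    have ge: "0 \<le> Inf ?S" using cInf_greatest[OF ne nn] .
    have eq: "fsn (quot A J) n (fminus (quot A J) (coset A J (s k)) (coset A J a)) = Inf ?S"
      unfolding coset_fminus[OF s a] by (simp add: quot_def)
    show "norm (fsn (quot A J) n (fminus (quot A J) (coset A J (s k)) (coset A J a))) \<le> fsn A n (fminus A (s k) a)"
      using eq le ge by simp
  qed
qed

end

theorem proposition2p11:
  fixes A :: "'a falg" and I J :: "'a set"
  assumes "frechet_algebra A"
    and "closed_ideal A I"
    and "closed_ideal A J"
    and "J \<subseteq> I"
    and "amenable_mod A I TYPE('e)"
  shows "amenable_mod (quot A J) (qideal A J I) TYPE('e)"
  unfolding amenable_mod_def
proof (intro allI impI)
  fix E :: "'e bsp" and la' ra' D'
  let ?Q = "quot A J"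
  let ?c = "coset A J"
  assume H: "banach_space E \<and> bimodule ?Q E la' ra' \<and>
        (\<forall>a\<in>qideal A J I. \<forall>x\<in>bcar E. la' a x = bzero E \<and> ra' x a = bzero E) \<and>
        cont_derivation ?Q E la' ra' D'"
  have fr: "frechet_algebra A" and cj: "closed_ideal A J" using assms by blast+
  have carQ: "fcar ?Q = ?c ` fcar A" by (simp add: quot_def)
  have cin: "\<And>a. a \<in> fcar A \<Longrightarrow> ?c a \<in> fcar ?Q" using carQ by blast
  define la where "la = (\<lambda>a x. la' (?c a) x)"
  define ra where "ra = (\<lambda>x a. ra' x (?c a))"
  define D where "D = (\<lambda>a. D' (?c a))"
  have bmQ: "bimodule ?Q E la' ra'" using H by blast
  have cdQ: "cont_derivation ?Q E la' ra' D'" using H by blast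
  have bmC: "\<forall>s a t x. (\<forall>k. s k \<in> fcar ?Q \<and> t k \<in> bcar E) \<and> a \<in> fcar ?Q \<and> x \<in> bcar E \<and>
          fconv ?Q s a \<and> (\<lambda>k. bnorm E (bminus E (t k) x)) \<longlonglongrightarrow> 0 \<longrightarrow>
          (\<lambda>k. bnorm E (bminus E (la' (s k) (t k)) (la' a x))) \<longlonglongrightarrow> 0 \<and>
          (\<lambda>k. bnorm E (bminus E (ra' (t k) (s k)) (ra' x a))) \<longlonglongrightarrow> 0"
    using bmQ unfolding bimodule_def by argo
  have cdC: "\<forall>s a. (\<forall>k. s k \<in> fcar ?Q) \<and> a \<in> fcar ?Q \<and> fconv ?Q s a \<longrightarrow>
          (\<lambda>k. dnorm E (\<lambda>x. D' (s k) x - D' a x)) \<longlonglongrightarrow> 0"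
    using cdQ unfolding cont_derivation_def by argo
  note add = coset_add[OF fr cj] and smul = coset_smul[OF fr cj] and mul = coset_mul[OF fr cj]
    and cq = conv_quot[OF fr cj]
  have bm: "bimodule A E la ra"
    unfolding bimodule_def la_def ra_def
  proof (intro conjI ballI allI impI)
    fix a x assume "a \<in> fcar A" "x \<in> bcar E"
    thus "la' (?c a) x \<in> bcar E" "ra' x (?c a) \<in> bcar E"
      using bmQ cin unfolding bimodule_def by blast+
  next
    fix a b x assume h: "a \<in> fcar A" "b \<in> fcar A" "x \<in> bcar E"
    thus "la' (?c (fadd A a b)) x = badd E (la' (?c a) x) (la' (?c b) x)"
         "ra' x (?c (fadd A a b)) = badd E (ra' x (?c a)) (ra' x (?c b))"
      using bmQ cin add[OF h(1,2), symmetric] unfolding bimodule_def by simp_all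
  next
    fix a x y assume "a \<in> fcar A" "x \<in> bcar E" "y \<in> bcar E"
    thus "la' (?c a) (badd E x y) = badd E (la' (?c a) x) (la' (?c a) y)"
         "ra' (badd E x y) (?c a) = badd E (ra' x (?c a)) (ra' y (?c a))"
      using bmQ cin unfolding bimodule_def by blast+
  next
    fix c a x assume h: "a \<in> fcar A" "x \<in> bcar E"
    thus "la' (?c (fsmul A c a)) x = bsmul E c (la' (?c a) x)"
         "la' (?c a) (bsmul E c x) = bsmul E c (la' (?c a) x)"
         "ra' x (?c (fsmul A c a)) = bsmul E c (ra' x (?c a))"
         "ra' (bsmul E c x) (?c a) = bsmul E c (ra' x (?c a))"
      using bmQ cin smul[OF h(1), symmetric] unfolding bimodule_def by simp_all
  next
    fix a b x assume h: "a \<in> fcar A" "b \<in> fcar A" "x \<in> bcar E"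
    thus "la' (?c (fmul A a b)) x = la' (?c a) (la' (?c b) x)"
         "ra' x (?c (fmul A a b)) = ra' (ra' x (?c a)) (?c b)"
         "ra' (la' (?c a) x) (?c b) = la' (?c a) (ra' x (?c b))"
      using bmQ cin mul[OF h(1,2), symmetric] unfolding bimodule_def by simp_all
  next
    fix s a t x
    assume h: "(\<forall>k. s k \<in> fcar A \<and> t k \<in> bcar E) \<and> a \<in> fcar A \<and> x \<in> bcar E \<and>
          fconv A s a \<and> (\<lambda>k. bnorm E (bminus E (t k) x)) \<longlonglongrightarrow> 0"
    have c2: "fconv ?Q (\<lambda>k. ?c (s k)) (?c a)" using cq h by blast
    have "(\<forall>k. ?c (s k) \<in> fcar ?Q \<and> t k \<in> bcar E) \<and> ?c a \<in> fcar ?Q \<and> x \<in> bcar E \<and>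
          fconv ?Q (\<lambda>k. ?c (s k)) (?c a) \<and> (\<lambda>k. bnorm E (bminus E (t k) x)) \<longlonglongrightarrow> 0"
      using h c2 cin by blast
    hence "(\<lambda>k. bnorm E (bminus E (la' ((\<lambda>k. ?c (s k)) k) (t k)) (la' (?c a) x))) \<longlonglongrightarrow> 0 \<and>
          (\<lambda>k. bnorm E (bminus E (ra' (t k) ((\<lambda>k. ?c (s k)) k)) (ra' x (?c a)))) \<longlonglongrightarrow> 0"
      by (rule bmC[rule_format])
    thus "(\<lambda>k. bnorm E (bminus E (la' (?c (s k)) (t k)) (la' (?c a) x))) \<longlonglongrightarrow> 0"
         "(\<lambda>k. bnorm E (bminus E (ra' (t k) (?c (s k))) (ra' x (?c a)))) \<longlonglongrightarrow> 0" by simp_all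
  qed
  have van: "\<forall>a\<in>I. \<forall>x\<in>bcar E. la a x = bzero E \<and> ra x a = bzero E"
    using H unfolding la_def ra_def qideal_def by blast
  have cd: "cont_derivation A E la ra D"
    unfolding cont_derivation_def la_def ra_def D_def
  proof (intro conjI ballI allI impI)
    fix a assume "a \<in> fcar A" thus "in_dual E (D' (?c a))"
      using cdQ cin unfolding cont_derivation_def by blast
  next
    fix a b x assume h: "a \<in> fcar A" "b \<in> fcar A" "x \<in> bcar E"
    thus "D' (?c (fadd A a b)) x = D' (?c a) x + D' (?c b) x"
      using cdQ cin add[OF h(1,2), symmetric] unfolding cont_derivation_def by simp
  next
    fix c a x assume h: "a \<in> fcar A" "x \<in> bcar E"
    thus "D' (?c (fsmul A c a)) x = c * D' (?c a) x"
      using cdQ cin smul[OF h(1), symmetric] unfolding cont_derivation_def by simp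
  next
    fix a b x assume h: "a \<in> fcar A" "b \<in> fcar A" "x \<in> bcar E"
    thus "D' (?c (fmul A a b)) x = D' (?c b) (ra' x (?c a)) + D' (?c a) (la' (?c b) x)"
      using cdQ cin mul[OF h(1,2), symmetric] unfolding cont_derivation_def by simp
  next
    fix s a assume h: "(\<forall>k. s k \<in> fcar A) \<and> a \<in> fcar A \<and> fconv A s a"
    have c2: "fconv ?Q (\<lambda>k. ?c (s k)) (?c a)" using cq h by blast
    have "(\<forall>k. ?c (s k) \<in> fcar ?Q) \<and> ?c a \<in> fcar ?Q \<and> fconv ?Q (\<lambda>k. ?c (s k)) (?c a)"
      using h c2 cin by blast
    hence "(\<lambda>k. dnorm E (\<lambda>x. D' ((\<lambda>k. ?c (s k)) k) x - D' (?c a) x)) \<longlonglongrightarrow> 0"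
      by (rule cdC[rule_format])
    thus "(\<lambda>k. dnorm E (\<lambda>x. D' (?c (s k)) x - D' (?c a) x)) \<longlonglongrightarrow> 0" by simp
  qed
  obtain f where f: "in_dual E f"
    "\<forall>a\<in>fcar A - I. \<forall>x\<in>bcar E. D a x = f (ra x a) - f (la a x)"
    using assms(5) H bm van cd unfolding amenable_mod_def by blast
  show "\<exists>f. in_dual E f \<and> (\<forall>a\<in>fcar ?Q - qideal A J I. \<forall>x\<in>bcar E. D' a x = f (ra' x a) - f (la' a x))"
  proof (intro exI conjI ballI)
    show "in_dual E f" by (rule f(1))
  next
    fix X x assume X: "X \<in> fcar ?Q - qideal A J I" and x: "x \<in> bcar E"
    then obtain a where a: "a \<in> fcar A" "X = ?c a" using carQ by blast
    have "a \<notin> I" using X a unfolding qideal_def by blast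
    thus "D' X x = f (ra' x X) - f (la' X x)" using f(2) a x unfolding D_def la_def ra_def by blast
  qed
qed

end
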